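(* Let $H$ and $\tilde H$ be equivalent dephased $d\times d$ complex Hadamard matrices. Then $\eta_c(H)=\eta_c(\tilde H)$, $\eta_r(H)=\eta_r(\tilde H)$, $\eta_{\bar c}(H)=\eta_{\bar c}(\tilde H)$ and $\eta_{\bar r}(H)=\eta_{\bar r}(\tilde H)$.
   Context: A $d\times d$ complex Hadamard matrix has unimodular entries and pairwise orthogonal columns; it is dephased if its first row and first column consist of $1$'s. Two complex Hadamard matrices $H_1,H_2$ are equivalent if $H_2=D_1P_1H_1P_2D_2$ with $D_1,D_2$ diagonal unitary and $P_1,P_2$ permutation matrices. Two distinct columns $C_A,C_B$ form an ER pair if $\overline{(C_A)_j}(C_B)_j\in\{1,-1\}$ for every $j$; ER pairs of rows are defined analogously. Two ER pairs of columns $\{C_1,C_2\}$ and $\{C_3,C_4\}$ are aligned if $\overline{(C_1)_k}(C_2)_k=\overline{(C_3)_k}(C_4)_k$ for every $k$ (analogously for rows). $\eta_c(H)$ (resp. $\eta_r(H)$) is the maximal number of pairwise disjoint ER pairs of columns (resp. rows) of $H$, and $\eta_{\bar c}(H)$ (resp. $\eta_{\bar r}(H)$) is the maximal number of pairwise disjoint ER pairs of columns (resp. rows) of $H$ that are mutually aligned. *)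

theory Defs
  imports "HOL-Analysis.Analysis"
begin

text \<open>A d x d complex matrix is represented as a function H :: nat => nat => complex,
  where H i j is the entry in row i and column j, for i, j < d (indices 0..d-1).\<close>

type_synonym cmat = "nat \<Rightarrow> nat \<Rightarrow> complex"

definition transp_mat :: "cmat \<Rightarrow> cmat" where
  "transp_mat H = (\<lambda>i j. H j i)"

definition complex_hadamard :: "nat \<Rightarrow> cmat \<Rightarrow> bool" where
  "complex_hadamard d H \<longleftrightarrow>
     (\<forall>i<d. \<forall>j<d. cmod (H i j) = 1) \<and>
     (\<forall>a<d. \<forall>b<d. a \<noteq> b \<longrightarrow> (\<Sum>k<d. cnj (H k a) * H k b) = 0)"

definition dephased :: "nat \<Rightarrow> cmat \<Rightarrow> bool" where
  "dephased d H \<longleftrightarrow> (\<forall>j<d. H 0 j = 1) \<and> (\<forall>i<d. H i 0 = 1)"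

text \<open>H2 = D1 P1 H1 P2 D2 with D1, D2 diagonal unitary (unimodular diagonal entries)
  and P1, P2 permutation matrices.\<close>
definition hadamard_equiv :: "nat \<Rightarrow> cmat \<Rightarrow> cmat \<Rightarrow> bool" where
  "hadamard_equiv d H1 H2 \<longleftrightarrow>
     (\<exists>u v :: nat \<Rightarrow> complex. \<exists>p q :: nat \<Rightarrow> nat.
        (\<forall>i<d. cmod (u i) = 1) \<and> (\<forall>j<d. cmod (v j) = 1) \<and>
        p permutes {..<d} \<and> q permutes {..<d} \<and>
        (\<forall>i<d. \<forall>j<d. H2 i j = u i * H1 (p i) (q j) * v j))"

definition ER_cols :: "nat \<Rightarrow> cmat \<Rightarrow> nat \<Rightarrow> nat \<Rightarrow> bool" where
  "ER_cols d H a b \<longleftrightarrow> a < d \<and> b < d \<and> a \<noteq> b \<and>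
     (\<forall>j<d. cnj (H j a) * H j b \<in> {1, -1})"

definition aligned_cols :: "nat \<Rightarrow> cmat \<Rightarrow> nat \<times> nat \<Rightarrow> nat \<times> nat \<Rightarrow> bool" where
  "aligned_cols d H p r \<longleftrightarrow>
     (\<forall>k<d. cnj (H k (fst p)) * H k (snd p) = cnj (H k (fst r)) * H k (snd r))"

text \<open>A family of pairwise disjoint ER pairs of columns; each pair is recorded
  as an ordered pair (a,b) (both orientations are allowed; disjointness forbids duplicates).\<close>
definition disjoint_ER_col_family :: "nat \<Rightarrow> cmat \<Rightarrow> (nat \<times> nat) set \<Rightarrow> bool" where
  "disjoint_ER_col_family d H P \<longleftrightarrow>
     (\<forall>p\<in>P. ER_cols d H (fst p) (snd p)) \<and>
     (\<forall>p\<in>P. \<forall>r\<in>P. p \<noteq> r \<longrightarrow> {fst p, snd p} \<inter> {fst r, snd r} = {})"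

definition eta_c :: "nat \<Rightarrow> cmat \<Rightarrow> nat" where
  "eta_c d H = Max {card P | P. disjoint_ER_col_family d H P}"

definition eta_cbar :: "nat \<Rightarrow> cmat \<Rightarrow> nat" where
  "eta_cbar d H = Max {card P | P. disjoint_ER_col_family d H P \<and>
                         (\<forall>p\<in>P. \<forall>r\<in>P. aligned_cols d H p r)}"

definition eta_r :: "nat \<Rightarrow> cmat \<Rightarrow> nat" where
  "eta_r d H = eta_c d (transp_mat H)"

definition eta_rbar :: "nat \<Rightarrow> cmat \<Rightarrow> nat" where
  "eta_rbar d H = eta_cbar d (transp_mat H)"

end

theory Submission
  imports Defs
begin

lemma unit_cnj: "cmod z = 1 \<Longrightarrow> cnj z * z = 1"
  by (metis complex_norm_square mult.commute of_real_1 power_one)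

lemma prod_formula:
  assumes u: "\<forall>i<d. cmod (u i) = 1"
      and eq: "\<forall>i<d. \<forall>j<d. H2 i j = u i * H1 (p i) (q j) * v j"
      and k: "k < d" and a: "a < d" and b: "b < d"
  shows "cnj (H2 k a) * H2 k b = (cnj (v a) * v b) * (cnj (H1 (p k) (q a)) * H1 (p k) (q b))"
proof -
  have "cnj (u k) * u k = 1" using u k unit_cnj by blast
  then show ?thesis using eq k a b
    by (simp add: algebra_simps)
qed

lemma pm1_sq: "(s::complex) \<in> {1,-1} \<Longrightarrow> s * s = 1" by auto

lemma key:
  assumes u: "\<forall>i<d. cmod (u i) = 1" and v: "\<forall>j<d. cmod (v j) = 1"
      and p: "p permutes {..<d}" and q: "q permutes {..<d}"
      and eq: "\<forall>i<d. \<forall>j<d. H2 i j = u i * H1 (p i) (q j) * v j"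
      and d1: "\<forall>j<d. H1 0 j = 1" and d2: "\<forall>j<d. H2 0 j = 1"
  shows "eta_c d H1 = eta_c d H2 \<and> eta_cbar d H1 = eta_cbar d H2"
proof -
  define c :: "cmat \<Rightarrow> nat \<Rightarrow> nat \<Rightarrow> nat \<Rightarrow> complex" where "c = (\<lambda>H k a b. cnj (H k a) * H k b)"
  define s where "s = (\<lambda>a b. cnj (v a) * v b)"
  have pf: "\<And>k a b. k < d \<Longrightarrow> a < d \<Longrightarrow> b < d \<Longrightarrow> c H2 k a b = s a b * c H1 (p k) (q a) (q b)"
    unfolding c_def s_def using prod_formula[of d u H2 H1 p q v, OF u eq] by blast
  have qlt: "\<And>a. (q a < d) = (a < d)"
    by (metis lessThan_iff p permutes_def permutes_in_image q)
  have plt: "\<And>a. a < d \<Longrightarrow> p a < d"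
    using p permutes_in_image by fastforce
  have qinj: "inj q" using q permutes_inj by blast
  have psurj: "\<And>j. j < d \<Longrightarrow> \<exists>k<d. p k = j"
    by (metis lessThan_iff p permutes_def)
  have c10: "\<And>a b. a < d \<Longrightarrow> b < d \<Longrightarrow> c H1 0 a b = 1" using d1 unfolding c_def by simp
  have c20: "\<And>a b. a < d \<Longrightarrow> b < d \<Longrightarrow> c H2 0 a b = 1" using d2 unfolding c_def by simp
  have snz: "\<And>a b. a < d \<Longrightarrow> b < d \<Longrightarrow> s a b \<noteq> 0"
    unfolding s_def using v by (metis complex_cnj_zero_iff mult_eq_0_iff norm_zero zero_neq_one)
  have sk0: "\<And>a b. a < d \<Longrightarrow> b < d \<Longrightarrow> \<exists>k0<d. c H2 k0 a b = s a b"
  proof -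
    fix a b assume ab: "a < d" "b < d"
    then have "0 < d" by simp
    then obtain k0 where k0: "k0 < d" "p k0 = 0" using psurj by blast
    then show "\<exists>k0<d. c H2 k0 a b = s a b" using pf[OF k0(1) ab] c10 ab qlt by auto
  qed
  have ER: "\<And>a b. ER_cols d H2 a b = ER_cols d H1 (q a) (q b)"
  proof
    fix a b assume E: "ER_cols d H2 a b"
    then have ab: "a < d" "b < d" "a \<noteq> b" and all: "\<forall>k<d. c H2 k a b \<in> {1,-1}"
      unfolding ER_cols_def c_def by auto
    obtain k0 where k0: "k0 < d" "c H2 k0 a b = s a b" using sk0 ab by blast
    have sp: "s a b \<in> {1,-1}" using all k0 by metis
    show "ER_cols d H1 (q a) (q b)" unfolding ER_cols_def
    proof (intro conjI allI impI)
      show "q a < d" "q b < d" using ab qlt by auto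
      show "q a \<noteq> q b" using ab qinj by (meson injD)
      fix j assume j: "j < d"
      then obtain k where k: "k < d" "p k = j" using psurj by blast
      have "c H2 k a b = s a b * c H1 j (q a) (q b)" using pf[OF k(1) ab(1,2)] k by simp
      then have "c H1 j (q a) (q b) = s a b * c H2 k a b" using pm1_sq[OF sp]
        by (metis mult.assoc mult_1)
      moreover have "c H2 k a b \<in> {1,-1}" using all k by blast
      ultimately show "cnj (H1 j (q a)) * H1 j (q b) \<in> {1, -1}" using sp unfolding c_def by auto
    qed
  next
    fix a b assume E: "ER_cols d H1 (q a) (q b)"
    then have ab: "a < d" "b < d" "a \<noteq> b" and all: "\<forall>k<d. c H1 k (q a) (q b) \<in> {1,-1}"
      unfolding ER_cols_def c_def using qlt qinj by auto
    have "0 < d" using ab by simp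
    have e0: "1 = s a b * c H1 (p 0) (q a) (q b)" using pf[OF \<open>0<d\<close> ab(1,2)] c20 ab by simp
    have cp: "c H1 (p 0) (q a) (q b) \<in> {1,-1}" using all plt \<open>0<d\<close> by blast
    have "s a b = c H1 (p 0) (q a) (q b)"
      by (metis pm1_sq[OF cp] e0 mult.assoc mult.right_neutral mult.left_neutral)
    then have sp: "s a b \<in> {1,-1}" using cp by simp
    show "ER_cols d H2 a b" unfolding ER_cols_def
    proof (intro conjI allI impI)
      show "a < d" "b < d" "a \<noteq> b" using ab by auto
      fix k assume k: "k < d"
      have "c H1 (p k) (q a) (q b) \<in> {1,-1}" using all plt k by blast
      then show "cnj (H2 k a) * H2 k b \<in> {1, -1}" using pf[OF k ab(1,2)] sp unfolding c_def by auto
    qed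
  qed
  have AL: "\<And>a b a' b'. a < d \<Longrightarrow> b < d \<Longrightarrow> a' < d \<Longrightarrow> b' < d \<Longrightarrow>
      aligned_cols d H2 (a,b) (a',b') = aligned_cols d H1 (q a, q b) (q a', q b')"
  proof -
    fix a b a' b' assume ab: "a < d" "b < d" "a' < d" "b' < d"
    then have "0 < d" by simp
    obtain k0 where k0: "k0 < d" "p k0 = 0" using psurj \<open>0<d\<close> by blast
    have A2: "aligned_cols d H2 (a,b) (a',b') = (\<forall>k<d. c H2 k a b = c H2 k a' b')"
      unfolding aligned_cols_def c_def by simp
    have A1: "aligned_cols d H1 (q a, q b) (q a', q b') = (\<forall>k<d. c H1 k (q a) (q b) = c H1 k (q a') (q b'))"
      unfolding aligned_cols_def c_def by simp
    show "?thesis a b a' b'" unfolding A1 A2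
    proof
      assume L: "\<forall>k<d. c H2 k a b = c H2 k a' b'"
      have "s a b = s a' b'" using L[rule_format, OF k0(1)] pf[OF k0(1) ab(1,2)] pf[OF k0(1) ab(3,4)]
          c10 k0 ab qlt by simp
      show "\<forall>k<d. c H1 k (q a) (q b) = c H1 k (q a') (q b')"
      proof (intro allI impI)
        fix j assume j: "j < d"
        then obtain k where k: "k < d" "p k = j" using psurj by blast
        have "s a b * c H1 j (q a) (q b) = s a b * c H1 j (q a') (q b')"
          using L k pf[OF k(1) ab(1,2)] pf[OF k(1) ab(3,4)] \<open>s a b = s a' b'\<close> by metis
        then show "c H1 j (q a) (q b) = c H1 j (q a') (q b')" using snz ab by simp
      qed
    next
      assume R: "\<forall>k<d. c H1 k (q a) (q b) = c H1 k (q a') (q b')"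
      have "p 0 < d" using plt \<open>0<d\<close> by blast
      have e1: "s a b * c H1 (p 0) (q a) (q b) = 1" using pf[OF \<open>0<d\<close> ab(1,2)] c20 ab by simp
      have e2: "s a' b' * c H1 (p 0) (q a) (q b) = 1" using pf[OF \<open>0<d\<close> ab(3,4)] c20 ab
          R \<open>p 0 < d\<close> by simp
      have "c H1 (p 0) (q a) (q b) \<noteq> 0" using e1 by auto
      then have ss: "s a b = s a' b'" using e1 e2 by (metis mult_right_cancel)
      show "\<forall>k<d. c H2 k a b = c H2 k a' b'"
        using pf ab R plt ss by simp
    qed
  qed
  define f where "f = map_prod q q"
  define g where "g = map_prod (inv q) (inv q)"
  have finj: "inj f" unfolding f_def using map_prod_inj_on[OF qinj qinj] by simp
  have fg: "\<And>x. f (g x) = x" unfolding f_def g_def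
    using permutes_inverses(1)[OF q] by (simp add: map_prod_def case_prod_beta)
  have FAM: "\<And>P. disjoint_ER_col_family d H2 P = disjoint_ER_col_family d H1 (f ` P)"
  proof -
    fix P
    have dj: "\<And>a b a' b'. ({q a, q b} \<inter> {q a', q b'} = {}) = ({a, b} \<inter> {a', b'} = {})"
      using qinj by (auto simp: inj_eq)
    have fi: "\<And>x y. (f x = f y) = (x = y)" using finj by (simp add: inj_eq)
    have e1: "(\<forall>x\<in>f ` P. ER_cols d H1 (fst x) (snd x)) = (\<forall>x\<in>P. ER_cols d H2 (fst x) (snd x))"
      by (simp add: f_def ER)
    have e2: "(\<forall>x\<in>f ` P. \<forall>y\<in>f ` P. x \<noteq> y \<longrightarrow> {fst x, snd x} \<inter> {fst y, snd y} = {})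
        = (\<forall>x\<in>P. \<forall>y\<in>P. x \<noteq> y \<longrightarrow> {fst x, snd x} \<inter> {fst y, snd y} = {})"
      using fi by (simp add: f_def dj inj_eq[OF qinj])
    show "?thesis P" unfolding disjoint_ER_col_family_def e1 e2 ..
  qed
  have ALF: "\<And>P. disjoint_ER_col_family d H2 P \<Longrightarrow>
     (\<forall>x\<in>P. \<forall>y\<in>P. aligned_cols d H2 x y) = (\<forall>x\<in>f ` P. \<forall>y\<in>f ` P. aligned_cols d H1 x y)"
  proof -
    fix P assume F: "disjoint_ER_col_family d H2 P"
    have lt: "\<And>x. x \<in> P \<Longrightarrow> fst x < d \<and> snd x < d" using F
      unfolding disjoint_ER_col_family_def ER_cols_def by blast
    have "\<forall>x\<in>P. \<forall>y\<in>P. aligned_cols d H2 x y = aligned_cols d H1 (f x) (f y)"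
    proof (intro ballI)
      fix x y assume "x \<in> P" "y \<in> P"
      then have "fst x < d" "snd x < d" "fst y < d" "snd y < d" using lt by auto
      then show "aligned_cols d H2 x y = aligned_cols d H1 (f x) (f y)"
        using AL[of "fst x" "snd x" "fst y" "snd y"] by (simp add: f_def map_prod_def case_prod_beta)
    qed
    then show "?thesis P" by auto
  qed
  have S1: "{card P | P. disjoint_ER_col_family d H1 P} = {card P | P. disjoint_ER_col_family d H2 P}"
  proof (intro set_eqI iffI)
    fix n assume "n \<in> {card P | P. disjoint_ER_col_family d H1 P}"
    then obtain Q where Q: "n = card Q" "disjoint_ER_col_family d H1 Q" by blast
    have "f ` (g ` Q) = Q" using fg by (simp add: image_image)
    then show "n \<in> {card P | P. disjoint_ER_col_family d H2 P}"
      using Q FAM card_image[OF inj_on_subset[OF finj]] by (metis (mono_tags, lifting) mem_Collect_eq subset_UNIV)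
  next
    fix n assume "n \<in> {card P | P. disjoint_ER_col_family d H2 P}"
    then obtain P where P: "n = card P" "disjoint_ER_col_family d H2 P" by blast
    then show "n \<in> {card P | P. disjoint_ER_col_family d H1 P}"
      using FAM card_image[OF inj_on_subset[OF finj]] by (metis (mono_tags, lifting) mem_Collect_eq subset_UNIV)
  qed
  have S2: "{card P | P. disjoint_ER_col_family d H1 P \<and> (\<forall>x\<in>P. \<forall>y\<in>P. aligned_cols d H1 x y)}
     = {card P | P. disjoint_ER_col_family d H2 P \<and> (\<forall>x\<in>P. \<forall>y\<in>P. aligned_cols d H2 x y)}"
  proof (intro set_eqI iffI)
    fix n assume "n \<in> {card P | P. disjoint_ER_col_family d H1 P \<and> (\<forall>x\<in>P. \<forall>y\<in>P. aligned_cols d H1 x y)}"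
    then obtain Q where Q: "n = card Q" "disjoint_ER_col_family d H1 Q" "\<forall>x\<in>Q. \<forall>y\<in>Q. aligned_cols d H1 x y" by blast
    have fq: "f ` (g ` Q) = Q" using fg by (simp add: image_image)
    have F2: "disjoint_ER_col_family d H2 (g ` Q)" using FAM fq Q by metis
    have A2: "\<forall>x\<in>g ` Q. \<forall>y\<in>g ` Q. aligned_cols d H2 x y" using ALF[OF F2] fq Q by metis
    have "card (g ` Q) = n" using fq Q card_image[OF inj_on_subset[OF finj]] by (metis subset_UNIV)
    then show "n \<in> {card P | P. disjoint_ER_col_family d H2 P \<and> (\<forall>x\<in>P. \<forall>y\<in>P. aligned_cols d H2 x y)}"
      using F2 A2 by blast
  next
    fix n assume "n \<in> {card P | P. disjoint_ER_col_family d H2 P \<and> (\<forall>x\<in>P. \<forall>y\<in>P. aligned_cols d H2 x y)}"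
    then obtain P where P: "n = card P" "disjoint_ER_col_family d H2 P" "\<forall>x\<in>P. \<forall>y\<in>P. aligned_cols d H2 x y" by blast
    have "card (f ` P) = n" using P card_image[OF inj_on_subset[OF finj]] by (metis subset_UNIV)
    then show "n \<in> {card P | P. disjoint_ER_col_family d H1 P \<and> (\<forall>x\<in>P. \<forall>y\<in>P. aligned_cols d H1 x y)}"
      using P FAM ALF by blast
  qed
  show ?thesis unfolding eta_c_def eta_cbar_def S1 S2 by simp
qed

theorem corollary3:
  fixes d :: nat and H H' :: cmat
  assumes "complex_hadamard d H" and "dephased d H"
      and "complex_hadamard d H'" and "dephased d H'"
      and "hadamard_equiv d H H'"
  shows "eta_c d H = eta_c d H' \<and> eta_r d H = eta_r d H' \<and>
         eta_cbar d H = eta_cbar d H' \<and> eta_rbar d H = eta_rbar d H'"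
proof -
  obtain u v p q where u: "\<forall>i<d. cmod (u i) = 1" and v: "\<forall>j<d. cmod (v j) = 1"
    and p: "p permutes {..<d}" and q: "q permutes {..<d}"
    and eq: "\<forall>i<d. \<forall>j<d. H' i j = u i * H (p i) (q j) * v j"
    using assms(5) unfolding hadamard_equiv_def by blast
  have c: "eta_c d H = eta_c d H' \<and> eta_cbar d H = eta_cbar d H'"
    using key[OF u v p q eq] assms(2,4) unfolding dephased_def by blast
  have eqT: "\<forall>i<d. \<forall>j<d. transp_mat H' i j = v i * transp_mat H (q i) (p j) * u j"
    using eq unfolding transp_mat_def by (simp add: mult.commute mult.left_commute)
  have r: "eta_c d (transp_mat H) = eta_c d (transp_mat H') \<and> eta_cbar d (transp_mat H) = eta_cbar d (transp_mat H')"
    using key[OF v u q p eqT] assms(2,4) unfolding dephased_def transp_mat_def by blast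
  show ?thesis using c r unfolding eta_r_def eta_rbar_def by blast
qed

end
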